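(* Fix an integer $k\ge 3$. For every $\varepsilon>0$ there exists $N$ such that for all $n\ge N$, every vector $k$-separating code $\mathcal C\subseteq (S^{k-1})^n$ of block length $n$ satisfies \[ \frac{\log_2|\mathcal C|}{n}\le \frac{k!}{k^{k-1}}+\varepsilon . \]
   Context: $S^{k-1}$ denotes the unit sphere in $\mathbb R^k$. A subset $\mathcal C\subseteq (S^{k-1})^n$ is vector $k$-separating if for any $k$ distinct codewords $c^{(1)},\dots,c^{(k)}\in\mathcal C$ there is a coordinate $i\in[n]$ such that the vectors $c^{(1)}_i,\dots,c^{(k)}_i$ are mutually orthogonal. *)

theory Defs
  imports "HOL-Analysis.Analysis"
begin

text \<open>A code of block length n over the unit sphere S^{k-1} of R^k (k = CARD('k)):
  codewords are functions on the coordinate set {..<n} (extensional, i.e. undefined outside)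
  whose values are unit vectors.\<close>
definition sphere_code :: "nat \<Rightarrow> (nat \<Rightarrow> real^'k) set \<Rightarrow> bool" where
  "sphere_code n C \<longleftrightarrow> C \<subseteq> PiE {..<n} (\<lambda>_. sphere 0 1)"

definition vector_k_separating :: "nat \<Rightarrow> (nat \<Rightarrow> real^'k) set \<Rightarrow> bool" where
  "vector_k_separating n C \<longleftrightarrow>
     (\<forall>S. S \<subseteq> C \<and> finite S \<and> card S = CARD('k) \<longrightarrow>
        (\<exists>i<n. \<forall>x\<in>S. \<forall>y\<in>S. x \<noteq> y \<longrightarrow> inner (x i) (y i) = 0))"

end

theory Submission
  imports Defs
begin

definition clq :: "('a \<Rightarrow> 'a \<Rightarrow> bool) \<Rightarrow> 'a set \<Rightarrow> bool" where
  "clq R S \<longleftrightarrow> (\<forall>x\<in>S. \<forall>y\<in>S. x \<noteq> y \<longrightarrow> R x y)"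

definition cls :: "('a \<Rightarrow> 'a \<Rightarrow> bool) \<Rightarrow> 'a set \<Rightarrow> nat \<Rightarrow> 'a set set" where
  "cls R V t = {S. S \<subseteq> V \<and> card S = t \<and> clq R S}"

definition Fw :: "('a \<Rightarrow> 'a \<Rightarrow> bool) \<Rightarrow> ('a \<Rightarrow> real) \<Rightarrow> 'a set \<Rightarrow> nat \<Rightarrow> real" where
  "Fw R p V t = (\<Sum>S\<in>cls R V t. \<Prod>v\<in>S. p v)"

lemma finite_cls: "finite V \<Longrightarrow> finite (cls R V t)"
  unfolding cls_def by (rule finite_subset[of _ "Pow V"]) auto

lemma cls_0: "finite V \<Longrightarrow> cls R V 0 = {{}}"
  unfolding cls_def clq_def by (auto dest: finite_subset)

lemma Fw_0: "finite V \<Longrightarrow> Fw R p V 0 = 1"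
  by (simp add: Fw_def cls_0)

lemma Fw_empty: "Fw R p {} (Suc t) = 0"
  unfolding Fw_def cls_def by simp

lemma Fw_cong: "(\<And>x. x \<in> V \<Longrightarrow> p x = q x) \<Longrightarrow> Fw R p V t = Fw R q V t"
  unfolding Fw_def cls_def
  by (rule sum.cong) (auto intro!: prod.cong)

lemma Fw_nonneg: "(\<And>x. x \<in> V \<Longrightarrow> p x \<ge> 0) \<Longrightarrow> Fw R p V t \<ge> 0"
  unfolding Fw_def cls_def
  by (rule sum_nonneg, rule prod_nonneg) auto

lemma cls_insert:
  assumes sym: "\<And>x y. R x y = R y x" and fin: "finite W" and w: "w \<notin> W"
  shows "cls R (insert w W) (Suc t) = cls R W (Suc t) \<union> insert w ` cls R {x\<in>W. R w x} t"
proof (rule set_eqI, rule iffI)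
  fix S assume S: "S \<in> cls R (insert w W) (Suc t)"
  show "S \<in> cls R W (Suc t) \<union> insert w ` cls R {x\<in>W. R w x} t"
  proof (cases "w \<in> S")
    case False
    then show ?thesis using S by (auto simp: cls_def)
  next
    case True
    have finS: "finite S" using S fin by (auto simp: cls_def intro: finite_subset)
    have "S - {w} \<in> cls R {x\<in>W. R w x} t"
      using S True finS unfolding cls_def clq_def by auto
    moreover have "S = insert w (S - {w})" using True by auto
    ultimately show ?thesis by blast
  qed
next
  fix S assume "S \<in> cls R W (Suc t) \<union> insert w ` cls R {x\<in>W. R w x} t"
  then show "S \<in> cls R (insert w W) (Suc t)"
  proof
    assume "S \<in> cls R W (Suc t)" then show ?thesis by (auto simp: cls_def)
  next
    assume "S \<in> insert w ` cls R {x\<in>W. R w x} t"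
    then obtain S' where S': "S' \<in> cls R {x\<in>W. R w x} t" "S = insert w S'" by auto
    have finS': "finite S'" using S' fin by (auto simp: cls_def intro: finite_subset)
    have "w \<notin> S'" using S' w by (auto simp: cls_def)
    then show ?thesis using S' finS' sym unfolding cls_def clq_def by auto
  qed
qed

lemma Fw_insert:
  assumes sym: "\<And>x y. R x y = R y x" and fin: "finite W" and w: "w \<notin> W"
  shows "Fw R p (insert w W) (Suc t) = Fw R p W (Suc t) + p w * Fw R p {x\<in>W. R w x} t"
proof -
  have disj: "cls R W (Suc t) \<inter> insert w ` cls R {x\<in>W. R w x} t = {}"
    using w by (auto simp: cls_def)
  have inj: "inj_on (insert w) (cls R {x\<in>W. R w x} t)"
  proof (rule inj_onI)
    fix x y assume "x \<in> cls R {x\<in>W. R w x} t" "y \<in> cls R {x\<in>W. R w x} t" "insert w x = insert w y"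
    then have "w \<notin> x" "w \<notin> y" using w by (auto simp: cls_def)
    then show "x = y" using \<open>insert w x = insert w y\<close> by (metis Diff_insert_absorb)
  qed
  have fin2: "finite (cls R {x\<in>W. R w x} t)" using fin by (simp add: finite_cls)
  have "Fw R p (insert w W) (Suc t) = Fw R p W (Suc t) + (\<Sum>S\<in>insert w ` cls R {x\<in>W. R w x} t. \<Prod>v\<in>S. p v)"
    unfolding Fw_def cls_insert[OF sym fin w]
    by (rule sum.union_disjoint) (use fin fin2 disj in \<open>auto simp: finite_cls\<close>)
  also have "(\<Sum>S\<in>insert w ` cls R {x\<in>W. R w x} t. \<Prod>v\<in>S. p v)
      = (\<Sum>S\<in>cls R {x\<in>W. R w x} t. \<Prod>v\<in>insert w S. p v)"
    by (rule sum.reindex[OF inj, unfolded comp_def])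
  also have "\<dots> = (\<Sum>S\<in>cls R {x\<in>W. R w x} t. p w * (\<Prod>v\<in>S. p v))"
  proof (rule sum.cong[OF refl])
    fix S assume "S \<in> cls R {x\<in>W. R w x} t"
    then have "finite S" "w \<notin> S" using fin w by (auto simp: cls_def intro: finite_subset)
    then show "(\<Prod>v\<in>insert w S. p v) = p w * (\<Prod>v\<in>S. p v)" by simp
  qed
  also have "\<dots> = p w * Fw R p {x\<in>W. R w x} t"
    by (simp add: Fw_def sum_distrib_left)
  finally show ?thesis .
qed

lemma tangent_pow:
  fixes Q y :: real
  assumes "0 \<le> y" "0 \<le> Q"
  shows "real (Suc t) * Q * y ^ t - real t * y ^ Suc t \<le> Q ^ Suc t"
proof (induction t)
  case 0
  then show ?case by simp
next
  case (Suc t)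
  have id: "Q ^ Suc (Suc t) - (real (Suc (Suc t)) * Q * y ^ Suc t - real (Suc t) * y ^ Suc (Suc t))
    = Q * (Q ^ Suc t - (real (Suc t) * Q * y ^ t - real t * y ^ Suc t)) + real (Suc t) * y ^ t * (Q - y)^2"
    by (simp add: algebra_simps power2_eq_square)
  have "0 \<le> Q * (Q ^ Suc t - (real (Suc t) * Q * y ^ t - real t * y ^ Suc t))"
    using Suc assms by simp
  moreover have "0 \<le> real (Suc t) * y ^ t * (Q - y)^2" using assms by simp
  ultimately show ?case using id by linarith
qed

lemma alg_step:
  fixes x y :: real
  assumes x: "0 \<le> x" and y: "0 \<le> y"
  shows "real (w choose Suc t) * y ^ Suc t + x * real (w choose t) * y ^ t
         \<le> real (Suc w choose Suc t) * ((x + real w * y) / real (Suc w)) ^ Suc t"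
proof (cases "t \<le> w")
  case False
  then have a: "w choose t = 0" "w choose Suc t = 0" by (auto simp: binomial_eq_0)
  have "real (w choose Suc t) * y ^ Suc t + x * real (w choose t) * y ^ t = 0"
    unfolding a by simp
  moreover have "0 \<le> real (Suc w choose Suc t) * ((x + real w * y) / real (Suc w)) ^ Suc t"
    using x y by (intro mult_nonneg_nonneg zero_le_power divide_nonneg_nonneg) auto
  ultimately show ?thesis by linarith
next
  case True
  define c where "c = real (w choose t)"
  define Q where "Q = (x + real w * y) / real (Suc w)"
  have c0: "c \<ge> 0" by (simp add: c_def)
  have Q0: "Q \<ge> 0" using x y by (simp add: Q_def)
  have h1: "real (w choose Suc t) * real (Suc t) = c * (real w - real t)"
  proof -
    have "Suc t * (w choose Suc t) = (w - t) * (w choose t)"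
      using binomial_absorption[of t w] binomial_absorb_comp[of w t] by simp
    then have "real (Suc t * (w choose Suc t)) = real ((w - t) * (w choose t))" by simp
    then show ?thesis using True by (simp add: c_def of_nat_diff algebra_simps)
  qed
  have h2: "real (Suc w choose Suc t) * real (Suc t) = real (Suc w) * c"
  proof -
    have "real (Suc t * (Suc w choose Suc t)) = real (Suc w * (w choose t))"
      using Suc_times_binomial[of t w] by presburger
    then show ?thesis by (simp add: c_def algebra_simps)
  qed
  have xQ: "x = real (Suc w) * Q - real w * y" by (simp add: Q_def)
  have tan: "real (Suc t) * Q * y ^ t - real t * y ^ Suc t \<le> Q ^ Suc t"
    by (rule tangent_pow[OF y Q0])
  have "(real (w choose Suc t) * y ^ Suc t + x * c * y ^ t) * real (Suc t)
      = (real (w choose Suc t) * real (Suc t)) * y ^ Suc t + c * (real (Suc t) * x * y ^ t)"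
    by (simp add: algebra_simps)
  also have "\<dots> = c * ((real w - real t) * y ^ Suc t + real (Suc t) * x * y ^ t)"
    unfolding h1 by (simp add: algebra_simps)
  also have "\<dots> = c * real (Suc w) * (real (Suc t) * Q * y ^ t - real t * y ^ Suc t)"
    unfolding xQ by (simp add: algebra_simps)
  also have "\<dots> \<le> c * real (Suc w) * Q ^ Suc t"
    using tan c0 by (intro mult_left_mono) auto
  also have "\<dots> = (real (Suc w) * c) * Q ^ Suc t" by (simp only: ac_simps)
  also have "\<dots> = real (Suc w choose Suc t) * Q ^ Suc t * real (Suc t)"
    unfolding h2[symmetric] by (simp only: ac_simps)
  finally have "(real (w choose Suc t) * y ^ Suc t + x * c * y ^ t) * real (Suc t)
     \<le> real (Suc w choose Suc t) * Q ^ Suc t * real (Suc t)" .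
  then show ?thesis unfolding c_def Q_def
    by (rule mult_right_le_imp_le) simp
qed

lemma clq_subset: "clq R S \<Longrightarrow> T \<subseteq> S \<Longrightarrow> clq R T"
  unfolding clq_def by blast

lemma maclaurin:
  assumes sym: "\<And>x y. R x y = R y x"
  shows "finite K \<Longrightarrow> clq R K \<Longrightarrow> card K \<le> w \<Longrightarrow> (\<forall>v\<in>K. p v \<ge> 0) \<Longrightarrow>
    Fw R p K t \<le> real (w choose t) * (sum p K / real w) ^ t"
proof (induction K arbitrary: w t rule: finite_induct)
  case empty
  then show ?case by (cases t) (auto simp: Fw_0 Fw_empty)
next
  case (insert v K)
  obtain w' where w: "w = Suc w'" and cK: "card K \<le> w'"
    using insert by (cases w) auto
  have clqK: "clq R K" using insert(4) by (rule clq_subset) auto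
  have pK: "\<forall>v\<in>K. p v \<ge> 0" using insert by auto
  have pv: "p v \<ge> 0" using insert by auto
  show ?case
  proof (cases t)
    case 0
    then show ?thesis using insert by (simp add: Fw_0)
  next
    case (Suc t')
    have NK: "{x\<in>K. R v x} = K"
      using insert(2,4) unfolding clq_def by auto
    define a where "a = sum p K"
    define y where "y = a / real w'"
    have a0: "a \<ge> 0" unfolding a_def using pK by (simp add: sum_nonneg)
    have y0: "y \<ge> 0" unfolding y_def using a0 by simp
    have ay: "a = real w' * y"
    proof (cases "w' = 0")
      case True
      then have "K = {}" using cK insert(1) by simp
      then show ?thesis using True by (simp add: a_def)
    qed (simp add: y_def)
    have "Fw R p (insert v K) t = Fw R p K (Suc t') + p v * Fw R p K t'"
      unfolding Suc using Fw_insert[OF sym insert(1,2), where p=p and t="t'"] NK by simp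
    also have "\<dots> \<le> real (w' choose Suc t') * y ^ Suc t' + p v * (real (w' choose t') * y ^ t')"
      using insert.IH[OF clqK cK pK, of "Suc t'"] insert.IH[OF clqK cK pK, of t'] pv
      unfolding y_def a_def by (intro add_mono mult_left_mono) auto
    also have "\<dots> \<le> real (Suc w' choose Suc t') * ((p v + real w' * y) / real (Suc w')) ^ Suc t'"
      using alg_step[OF pv y0, of w' t'] by (simp add: algebra_simps)
    also have "\<dots> = real (w choose t) * (sum p (insert v K) / real w) ^ t"
      using insert(1,2) ay unfolding w Suc a_def by simp
    finally show ?thesis .
  qed
qed

lemma shift_step:
  assumes sym: "\<And>x y. R x y = R y x" and fin: "finite V"
    and uv: "u \<in> V" "v \<in> V" "u \<noteq> v" "\<not> R u v"
    and le: "Fw R p {x\<in>V-{u,v}. R v x} t \<le> Fw R p {x\<in>V-{u,v}. R u x} t"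
    and pv: "p v \<ge> 0"
  shows "Fw R p V (Suc t) \<le> Fw R (p(u := p u + p v)) (V - {v}) (Suc t)"
proof -
  define R0 where "R0 = V - {u,v}"
  have V: "V = insert u (insert v R0)" using uv unfolding R0_def by auto
  have fR0: "finite R0" using fin unfolding R0_def by simp
  have nu: "u \<notin> insert v R0" "v \<notin> R0" "u \<notin> R0" using uv unfolding R0_def by auto
  have Nu: "{x \<in> insert v R0. R u x} = {x\<in>R0. R u x}" using uv by auto
  have "Fw R p V (Suc t) = Fw R p (insert v R0) (Suc t) + p u * Fw R p {x\<in>R0. R u x} t"
    unfolding V using Fw_insert[OF sym _ nu(1), where p=p and t=t] fR0 Nu by simp
  also have "\<dots> = Fw R p R0 (Suc t) + p v * Fw R p {x\<in>R0. R v x} t + p u * Fw R p {x\<in>R0. R u x} t"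
    using Fw_insert[OF sym fR0 nu(2), where p=p and t=t] by simp
  also have "\<dots> \<le> Fw R p R0 (Suc t) + p v * Fw R p {x\<in>R0. R u x} t + p u * Fw R p {x\<in>R0. R u x} t"
    using mult_left_mono[OF le pv] unfolding R0_def by simp
  also have "\<dots> = Fw R (p(u := p u + p v)) R0 (Suc t)
      + (p(u := p u + p v)) u * Fw R (p(u := p u + p v)) {x\<in>R0. R u x} t"
  proof -
    have "Fw R (p(u := p u + p v)) R0 (Suc t) = Fw R p R0 (Suc t)"
      by (rule Fw_cong) (use nu in auto)
    moreover have "Fw R (p(u := p u + p v)) {x\<in>R0. R u x} t = Fw R p {x\<in>R0. R u x} t"
      by (rule Fw_cong) (use nu in auto)
    ultimately show ?thesis by (simp add: algebra_simps)
  qed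
  also have "\<dots> = Fw R (p(u := p u + p v)) (insert u R0) (Suc t)"
    using Fw_insert[OF sym fR0 nu(3), where p="p(u := p u + p v)" and t=t] by simp
  also have "insert u R0 = V - {v}" using uv unfolding R0_def by auto
  finally show ?thesis .
qed

lemma clique_bound:
  assumes sym: "\<And>x y. R x y = R y x"
  shows "finite V \<Longrightarrow> (\<forall>S\<subseteq>V. clq R S \<longrightarrow> card S \<le> w) \<Longrightarrow> (\<forall>v\<in>V. p v \<ge> 0) \<Longrightarrow>
    Fw R p V t \<le> real (w choose t) * (sum p V / real w) ^ t"
proof (induction "card V" arbitrary: V p rule: less_induct)
  case less
  show ?case
  proof (cases "clq R V")
    case True
    then show ?thesis using maclaurin[OF sym less(2) True, of w p t] less(3,4) by auto
  next
    case False
    then obtain u v where uv: "u \<in> V" "v \<in> V" "u \<noteq> v" "\<not> R u v"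
      unfolding clq_def by auto
    show ?thesis
    proof (cases t)
      case 0
      then show ?thesis using less(2) by (simp add: Fw_0)
    next
      case (Suc t')
      have main: "Fw R p V t \<le> real (w choose t) * (sum p V / real w) ^ t"
        if uv: "u \<in> V" "v \<in> V" "u \<noteq> v" "\<not> R u v"
          and le: "Fw R p {x\<in>V-{u,v}. R v x} t' \<le> Fw R p {x\<in>V-{u,v}. R u x} t'"
        for u v
      proof -
        define p' where "p' = p(u := p u + p v)"
        have "Fw R p V t \<le> Fw R p' (V - {v}) t"
          unfolding p'_def Suc by (rule shift_step[OF sym less(2) uv le]) (use less(4) uv in auto)
        also have "\<dots> \<le> real (w choose t) * (sum p' (V - {v}) / real w) ^ t"
        proof (rule less(1))
          show "card (V - {v}) < card V" using uv less(2) by (meson card_Diff1_less)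
          show "finite (V - {v})" using less(2) by simp
          show "\<forall>S\<subseteq>V - {v}. clq R S \<longrightarrow> card S \<le> w" using less(3) by auto
          show "\<forall>x\<in>V - {v}. p' x \<ge> 0" using less(4) uv unfolding p'_def by auto
        qed
        also have "sum p' (V - {v}) = sum p V"
        proof -
          have "sum p' (V - {v}) = p' u + sum p' (V - {v} - {u})"
            using uv less(2) by (subst sum.remove[of _ u]) auto
          also have "sum p' (V - {v} - {u}) = sum p (V - {v} - {u})"
            unfolding p'_def by (rule sum.cong) auto
          also have "p' u = p u + p v" unfolding p'_def by simp
          also have "sum p V = p v + sum p (V - {v})"
            using uv less(2) by (subst sum.remove[of _ v]) auto
          moreover have "sum p (V - {v}) = p u + sum p (V - {v} - {u})"
            using uv less(2) by (subst sum.remove[of _ u]) auto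
          ultimately show ?thesis by simp
        qed
        finally show ?thesis .
      qed
      show ?thesis
      proof (cases "Fw R p {x\<in>V-{u,v}. R v x} t' \<le> Fw R p {x\<in>V-{u,v}. R u x} t'")
        case True
        then show ?thesis using main[OF uv] by simp
      next
        case False
        have "V - {v,u} = V - {u,v}" by auto
        moreover have "\<not> R v u" using uv sym by auto
        ultimately show ?thesis using main[of v u] uv False by auto
      qed
    qed
  qed
qed


lemma card_filter_Suc:
  "card {i\<in>{..<Suc n}. P i} = card {i\<in>{..<n}. P i} + (if P n then 1 else 0)"
proof -
  have "{i\<in>{..<Suc n}. P i} = (if P n then insert n {i\<in>{..<n}. P i} else {i\<in>{..<n}. P i})"
    by (auto simp: less_Suc_eq)
  then show ?thesis by simp
qed

lemma hansel_sum:
  fixes A B :: "nat \<Rightarrow> 'a set"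
  assumes disj: "\<And>i. A i \<inter> B i = {}"
  shows "finite V \<Longrightarrow> (\<forall>u\<in>V. \<forall>v\<in>V. u \<noteq> v \<longrightarrow> (\<exists>i<n. (u \<in> A i \<and> v \<in> B i) \<or> (u \<in> B i \<and> v \<in> A i)))
    \<Longrightarrow> (\<Sum>v\<in>V. (1/2::real) ^ card {i\<in>{..<n}. v \<in> A i \<union> B i}) \<le> 1"
proof (induction n arbitrary: V)
  case 0
  then have "card V \<le> 1" by (metis card_le_Suc0_iff_eq less_zeroE One_nat_def)
  then show ?case by simp
next
  case (Suc n)
  define g where "g v = (1/2::real) ^ card {i\<in>{..<n}. v \<in> A i \<union> B i}" for v
  define V1 where "V1 = {v\<in>V. v \<notin> B n}"
  define V2 where "V2 = {v\<in>V. v \<notin> A n}"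
  have cov: "\<forall>u\<in>W. \<forall>v\<in>W. u \<noteq> v \<longrightarrow> (\<exists>i<n. (u \<in> A i \<and> v \<in> B i) \<or> (u \<in> B i \<and> v \<in> A i))"
    if W: "W \<subseteq> V" "\<forall>u\<in>W. \<forall>v\<in>W. \<not> ((u \<in> A n \<and> v \<in> B n) \<or> (u \<in> B n \<and> v \<in> A n))" for W
  proof (intro ballI impI)
    fix u v assume uv: "u \<in> W" "v \<in> W" "u \<noteq> v"
    then obtain i where i: "i < Suc n" "(u \<in> A i \<and> v \<in> B i) \<or> (u \<in> B i \<and> v \<in> A i)"
      using Suc.prems(2) W(1) by blast
    have "i \<noteq> n" using i W(2) uv by blast
    then show "\<exists>i<n. (u \<in> A i \<and> v \<in> B i) \<or> (u \<in> B i \<and> v \<in> A i)" using i by (intro exI[of _ i]) auto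
  qed
  have IH1: "sum g V1 \<le> 1" unfolding g_def
    by (rule Suc.IH) (use Suc.prems(1) in \<open>simp add: V1_def\<close>, rule cov, auto simp: V1_def)
  have IH2: "sum g V2 \<le> 1" unfolding g_def
    by (rule Suc.IH) (use Suc.prems(1) in \<open>simp add: V2_def\<close>, rule cov, auto simp: V2_def)
  have s1: "sum g V1 = (\<Sum>v\<in>V. if v \<notin> B n then g v else 0)"
    unfolding V1_def using Suc.prems(1) by (rule sum.inter_filter)
  have s2: "sum g V2 = (\<Sum>v\<in>V. if v \<notin> A n then g v else 0)"
    unfolding V2_def using Suc.prems(1) by (rule sum.inter_filter)
  have "(\<Sum>v\<in>V. (1/2::real) ^ card {i\<in>{..<Suc n}. v \<in> A i \<union> B i})
      = (\<Sum>v\<in>V. (1/2) * ((if v \<notin> B n then g v else 0) + (if v \<notin> A n then g v else 0)))"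
  proof (rule sum.cong[OF refl])
    fix v assume "v \<in> V"
    show "(1/2::real) ^ card {i\<in>{..<Suc n}. v \<in> A i \<union> B i}
      = (1/2) * ((if v \<notin> B n then g v else 0) + (if v \<notin> A n then g v else 0))"
      unfolding card_filter_Suc g_def using disj[of n] by auto
  qed
  also have "\<dots> = (1/2) * (sum g V1 + sum g V2)"
    unfolding s1 s2 sum.distrib[symmetric] sum_distrib_left ..
  also have "\<dots> \<le> 1" using IH1 IH2 by simp
  finally show ?case .
qed

lemma log_sum_bound:
  fixes d :: "'a \<Rightarrow> nat"
  assumes fin: "finite V" and ne: "V \<noteq> {}"
    and s: "(\<Sum>v\<in>V. (1/2::real) ^ d v) \<le> 1"
  shows "real (card V) * log 2 (real (card V)) \<le> (\<Sum>v\<in>V. real (d v))"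
proof -
  define M where "M = real (card V)"
  have M0: "M > 0" using fin ne by (simp add: M_def card_gt_0_iff)
  define a where "a = (\<Sum>v\<in>V. real (d v)) / M"
  have pw: "(1/2::real) ^ d v \<ge> exp (- ln 2 * a) * (1 - ln 2 * (real (d v) - a))" for v
  proof -
    have e: "exp (real (d v) * ln 2) = 2 ^ d v" by (simp add: exp_of_nat_mult)
    have "(1/2::real) ^ d v = inverse (exp (real (d v) * ln 2))"
      unfolding e by (simp add: power_one_over inverse_eq_divide)
    also have "\<dots> = exp (- ln 2 * real (d v))" by (simp add: exp_minus mult.commute)
    also have "\<dots> = exp (- ln 2 * a) * exp (- ln 2 * (real (d v) - a))"
      by (simp add: exp_add[symmetric] algebra_simps)
    also have "\<dots> \<ge> exp (- ln 2 * a) * (1 - ln 2 * (real (d v) - a))"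
      using exp_ge_add_one_self[of "- ln 2 * (real (d v) - a)"] by (intro mult_left_mono) auto
    finally show ?thesis .
  qed
  have le1: "(\<Sum>v\<in>V. exp (- ln 2 * a) * (1 - ln 2 * (real (d v) - a))) \<le> 1"
    using s pw by (meson order_trans sum_mono)
  define E where "E = exp (- ln 2 * a)"
  have "(\<Sum>v\<in>V. exp (- ln 2 * a) * (1 - ln 2 * (real (d v) - a)))
      = (\<Sum>v\<in>V. E * (1 + ln 2 * a) - (E * ln 2) * real (d v))"
    by (rule sum.cong) (auto simp: algebra_simps E_def)
  also have "\<dots> = M * (E * (1 + ln 2 * a)) - (E * ln 2) * (\<Sum>v\<in>V. real (d v))"
    by (simp add: sum_subtractf sum_distrib_left[symmetric] M_def)
  also have "(\<Sum>v\<in>V. real (d v)) = M * a" using M0 by (simp add: a_def)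
  also have "M * (E * (1 + ln 2 * a)) - (E * ln 2) * (M * a) = E * M" by (simp add: algebra_simps)
  finally have eq: "(\<Sum>v\<in>V. exp (- ln 2 * a) * (1 - ln 2 * (real (d v) - a))) = E * M" .
  have "exp (- ln 2 * a) * M \<le> 1" using le1 eq unfolding E_def by linarith
  then have "M \<le> exp (ln 2 * a)" by (simp add: exp_minus field_simps)
  then have "ln M \<le> ln 2 * a" using M0 by (metis ln_exp ln_le_cancel_iff exp_gt_zero)
  then have "log 2 M \<le> a" by (simp add: log_def field_simps)
  then have "M * log 2 M \<le> M * a" using M0 by simp
  then show ?thesis using M0 by (simp add: a_def M_def)
qed

lemma card_filter_sum: "finite A \<Longrightarrow> real (card {x\<in>A. P x}) = (\<Sum>x\<in>A. if P x then 1 else 0)"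
  by (simp add: sum.If_cases Int_def)

lemma hansel:
  fixes A B :: "nat \<Rightarrow> 'a set"
  assumes disj: "\<And>i. A i \<inter> B i = {}" and fin: "finite V" and ne: "V \<noteq> {}"
    and cover: "\<forall>u\<in>V. \<forall>v\<in>V. u \<noteq> v \<longrightarrow> (\<exists>i<n. (u \<in> A i \<and> v \<in> B i) \<or> (u \<in> B i \<and> v \<in> A i))"
  shows "real (card V) * log 2 (real (card V)) \<le> (\<Sum>i<n. real (card {v\<in>V. v \<in> A i \<union> B i}))"
proof -
  have "real (card V) * log 2 (real (card V)) \<le> (\<Sum>v\<in>V. real (card {i\<in>{..<n}. v \<in> A i \<union> B i}))"
    by (rule log_sum_bound[OF fin ne hansel_sum[OF disj fin cover]])
  also have "\<dots> = (\<Sum>v\<in>V. \<Sum>i<n. if v \<in> A i \<union> B i then 1 else 0)"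
    by (rule sum.cong[OF refl], rule card_filter_sum) simp
  also have "\<dots> = (\<Sum>i<n. \<Sum>v\<in>V. if v \<in> A i \<union> B i then 1 else 0)"
    by (rule sum.swap)
  also have "\<dots> = (\<Sum>i<n. real (card {v\<in>V. v \<in> A i \<union> B i}))"
    by (rule sum.cong[OF refl], rule card_filter_sum[symmetric]) (rule fin)
  finally show ?thesis .
qed


lemma orth_indep:
  fixes S :: "(real^'k) set"
  assumes "\<forall>x\<in>S. \<forall>y\<in>S. x \<noteq> y \<longrightarrow> inner x y = 0" "0 \<notin> S"
  shows "independent S"
  using assms by (intro pairwise_orthogonal_independent) (auto simp: pairwise_def orthogonal_def)

lemma orth_card:
  fixes S :: "(real^'k) set"
  assumes "\<forall>x\<in>S. \<forall>y\<in>S. x \<noteq> y \<longrightarrow> inner x y = 0" "0 \<notin> S"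
  shows "finite S \<and> card S \<le> CARD('k)"
  using independent_bound[OF orth_indep[OF assms]] by simp

lemma orth_span:
  fixes S :: "(real^'k) set"
  assumes "\<forall>x\<in>S. \<forall>y\<in>S. x \<noteq> y \<longrightarrow> inner x y = 0" "0 \<notin> S" "card S = CARD('k)"
  shows "span S = UNIV"
proof -
  have fin: "finite S" using orth_card[OF assms(1,2)] by simp
  have "independent S" by (rule orth_indep[OF assms(1,2)])
  moreover have "card S = dim (UNIV :: (real^'k) set)" using assms(3) by (simp add: dim_UNIV)
  ultimately have "UNIV \<subseteq> span S" using card_eq_dim[of S UNIV] fin by simp
  then show ?thesis by auto
qed

lemma partner:
  fixes Xv :: "(real^'k) set" and u w w' :: "real^'k"
  assumes Xorth: "\<forall>x\<in>Xv. \<forall>y\<in>Xv. x \<noteq> y \<longrightarrow> inner x y = 0"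
    and Xunit: "\<forall>x\<in>Xv. norm x = 1"
    and Xcard: "card Xv + 2 = CARD('k)"
    and unit: "norm u = 1" "norm w = 1" "norm w' = 1"
    and perp: "\<forall>x\<in>Xv. inner u x = 0" "\<forall>x\<in>Xv. inner w x = 0" "\<forall>x\<in>Xv. inner w' x = 0"
    and uw: "inner u w = 0" and uw': "inner u w' = 0"
  shows "w' = w \<or> w' = - w"
proof -
  have n0: "0 \<notin> Xv" using Xunit by force
  have finX: "finite Xv" using orth_card[OF Xorth n0] by simp
  have uu: "inner u u = 1" "inner w w = 1" "inner w' w' = 1"
    using unit by (simp_all add: inner_commute norm_eq_1)
  have uX: "u \<notin> Xv" using perp(1) uu by force
  have wX: "w \<notin> Xv" using perp(2) uu by force
  have uw_ne: "u \<noteq> w" using uw uu by force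
  define S where "S = insert u (insert w Xv)"
  have Sorth: "\<forall>x\<in>S. \<forall>y\<in>S. x \<noteq> y \<longrightarrow> inner x y = 0"
    unfolding S_def using Xorth perp uw by (auto simp: inner_commute)
  have S0: "0 \<notin> S" unfolding S_def using n0 unit by auto
  have Scard: "card S = CARD('k)" unfolding S_def using finX uX wX uw_ne Xcard by simp
  have span: "span S = UNIV" by (rule orth_span[OF Sorth S0 Scard])
  define z where "z = w' - (inner w' w) *\<^sub>R w"
  have zperp: "orthogonal z y" if "y \<in> S" for y
  proof -
    have "y = u \<or> y = w \<or> y \<in> Xv" using that unfolding S_def by auto
    then show ?thesis
    proof (elim disjE)
      assume "y = u"
      have "u \<bullet> w = 0" "u \<bullet> w' = 0" using uw uw' .
      then show ?thesis using \<open>y = u\<close> unfolding z_def orthogonal_def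
        by (simp add: inner_diff_left inner_diff_right inner_commute[of _ u])
    next
      assume "y = w" then show ?thesis using uu unfolding z_def orthogonal_def
        by (simp add: inner_diff_left)
    next
      assume "y \<in> Xv" then show ?thesis using perp unfolding z_def orthogonal_def
        by (simp add: inner_diff_left)
    qed
  qed
  have "orthogonal z z" by (rule orthogonal_to_span[of z S z]) (use span zperp in auto)
  then have "z = 0" by (simp add: orthogonal_def)
  then have w'eq: "w' = (inner w' w) *\<^sub>R w" unfolding z_def by simp
  have "norm w' = \<bar>inner w' w\<bar> * norm w" by (subst w'eq) simp
  then have "\<bar>inner w' w\<bar> = 1" using unit by simp
  then have "inner w' w = 1 \<or> inner w' w = -1" by auto
  then show ?thesis using w'eq by auto
qed


definition Ri :: "nat \<Rightarrow> (nat \<Rightarrow> real^'k) \<Rightarrow> (nat \<Rightarrow> real^'k) \<Rightarrow> bool" where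
  "Ri i c d \<longleftrightarrow> inner (c i) (d i) = 0"

lemma Ri_sym: "Ri i c d = Ri i d c"
  by (simp add: Ri_def inner_commute)

lemma unit_val:
  assumes "sphere_code n C" "c \<in> C" "i < n"
  shows "norm (c i) = 1"
proof -
  have "c \<in> PiE {..<n} (\<lambda>_. sphere 0 1)" using assms unfolding sphere_code_def by auto
  then have "c i \<in> sphere 0 1" using assms(3) by (auto simp: PiE_def Pi_def)
  then show ?thesis by simp
qed

lemma inner_self_unit: "norm (x::real^'k) = 1 \<Longrightarrow> inner x x = 1"
  by (simp add: norm_eq_1)

lemma clq_inj:
  assumes sc: "sphere_code n C" and i: "i < n" and S: "S \<subseteq> C" and c: "clq (Ri i) S"
  shows "inj_on (\<lambda>c. c i) S"
proof (rule inj_onI, rule ccontr)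
  fix x y assume xy: "x \<in> S" "y \<in> S" "x i = y i" "x \<noteq> y"
  then have "inner (x i) (y i) = 0" using c unfolding clq_def Ri_def by blast
  then have "inner (x i) (x i) = 0" using xy(3) by simp
  moreover have "inner (x i) (x i) = 1" using unit_val[OF sc _ i] xy S inner_self_unit by auto
  ultimately show False by simp
qed

lemma clique_card:
  fixes C :: "(nat \<Rightarrow> real^'k) set"
  assumes sc: "sphere_code n C" and i: "i < n" and S: "S \<subseteq> C" and c: "clq (Ri i) S"
  shows "card S \<le> CARD('k)"
proof -
  have inj: "inj_on (\<lambda>c. c i) S" by (rule clq_inj[OF sc i S c])
  have o: "\<forall>x\<in>(\<lambda>c. c i) ` S. \<forall>y\<in>(\<lambda>c. c i) ` S. x \<noteq> y \<longrightarrow> inner x y = 0"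
    using c unfolding clq_def Ri_def by auto
  have z: "0 \<notin> (\<lambda>c. c i) ` S" using unit_val[OF sc _ i] S by force
  have "card ((\<lambda>c. c i) ` S) \<le> CARD('k)" using orth_card[OF o z] by simp
  then show ?thesis using card_image[OF inj] by simp
qed

lemma Dclaim:
  fixes C :: "(nat \<Rightarrow> real^'k) set"
  assumes sc: "sphere_code n C" and i: "i < n" and X: "X \<subseteq> C" "card X + 2 = CARD('k)"
    and uvd: "u \<in> C - X" "v \<in> C - X" "d \<in> C - X"
    and cu: "clq (Ri i) (insert u X)" and cv: "clq (Ri i) (insert v X)" and cd: "clq (Ri i) (insert d X)"
    and uv: "Ri i u v" and ud: "Ri i u d"
  shows "d i = v i \<or> d i = - v i"
proof -
  have cX: "clq (Ri i) X" using cu by (rule clq_subset) auto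
  have inj: "inj_on (\<lambda>c. c i) X" by (rule clq_inj[OF sc i X(1) cX])
  show ?thesis
  proof (rule partner[of "(\<lambda>c. c i) ` X" "u i"])
    show "\<forall>x\<in>(\<lambda>c. c i) ` X. \<forall>y\<in>(\<lambda>c. c i) ` X. x \<noteq> y \<longrightarrow> inner x y = 0"
      using cX unfolding clq_def Ri_def by auto
    show "\<forall>x\<in>(\<lambda>c. c i) ` X. norm x = 1" using unit_val[OF sc _ i] X by auto
    show "card ((\<lambda>c. c i) ` X) + 2 = CARD('k)" using card_image[OF inj] X(2) by simp
    show "norm (u i) = 1" "norm (v i) = 1" "norm (d i) = 1" using unit_val[OF sc _ i] uvd by auto
    show "\<forall>x\<in>(\<lambda>c. c i) ` X. inner (u i) x = 0" using cu uvd unfolding clq_def Ri_def by auto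
    show "\<forall>x\<in>(\<lambda>c. c i) ` X. inner (v i) x = 0" using cv uvd unfolding clq_def Ri_def by auto
    show "\<forall>x\<in>(\<lambda>c. c i) ` X. inner (d i) x = 0" using cd uvd unfolding clq_def Ri_def by auto
    show "inner (u i) (v i) = 0" "inner (u i) (d i) = 0" using uv ud unfolding Ri_def by auto
  qed
qed

lemma per_X:
  fixes C :: "(nat \<Rightarrow> real^'k) set"
  assumes sc: "sphere_code n C" and sep: "vector_k_separating n C" and fin: "finite C"
    and X: "X \<subseteq> C" "card X + 2 = CARD('k)" and ne: "C - X \<noteq> {}"
  shows "real (card (C - X)) * log 2 (real (card (C - X)))
     \<le> (\<Sum>i<n. real (card {c\<in>C - X. clq (Ri i) (insert c X)}))"
proof -
  obtain r :: "(nat \<Rightarrow> real^'k) \<Rightarrow> nat" where r: "inj_on r C"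
    using finite_imp_inj_to_nat_seg[OF fin] by blast
  have finX: "finite X" using X(1) fin by (rule finite_subset)
  define D where "D i = {c\<in>C - X. clq (Ri i) (insert c X)}" for i
  define L where "L i c = {d\<in>D i. d i = c i \<or> d i = - c i}" for i c
  define col where "col i c \<longleftrightarrow> Min (r ` L i c) < Min (r ` {d\<in>D i. Ri i c d})" for i c
  define A where "A i = {c\<in>D i. col i c}" for i
  define B where "B i = {c\<in>D i. \<not> col i c}" for i
  have disj: "A i \<inter> B i = {}" for i unfolding A_def B_def by auto
  have AB: "{v\<in>C - X. v \<in> A i \<union> B i} = D i" for i unfolding A_def B_def D_def by auto
  have finD: "finite (D i)" for i using fin unfolding D_def by simp
  have claim: "{d\<in>D i. Ri i u d} = L i v"
    if i: "i < n" and u: "u \<in> D i" and v: "v \<in> D i" and uv: "Ri i u v" for i u v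
  proof
    show "{d\<in>D i. Ri i u d} \<subseteq> L i v"
    proof
      fix d assume d: "d \<in> {d\<in>D i. Ri i u d}"
      have "d i = v i \<or> d i = - v i"
        by (rule Dclaim[OF sc i X, of u v d]) (use u v d uv in \<open>auto simp: D_def\<close>)
      then show "d \<in> L i v" using d unfolding L_def by auto
    qed
  next
    show "L i v \<subseteq> {d\<in>D i. Ri i u d}"
      using uv unfolding L_def Ri_def by (auto simp: inner_minus_right)
  qed
  have mins: "Min (r ` L i u) \<noteq> Min (r ` L i v)"
    if i: "i < n" and u: "u \<in> D i" and v: "v \<in> D i" and uv: "Ri i u v" for i u v
  proof
    assume eq: "Min (r ` L i u) = Min (r ` L i v)"
    have neu: "r ` L i u \<noteq> {}" using u unfolding L_def by auto
    have nev: "r ` L i v \<noteq> {}" using v unfolding L_def by auto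
    have fu: "finite (r ` L i u)" "finite (r ` L i v)" using finD unfolding L_def by auto
    obtain d1 where d1: "d1 \<in> L i u" "r d1 = Min (r ` L i u)" using Min_in[OF fu(1) neu] by auto
    obtain d2 where d2: "d2 \<in> L i v" "r d2 = Min (r ` L i v)" using Min_in[OF fu(2) nev] by auto
    have "d1 \<in> C" "d2 \<in> C" using d1 d2 unfolding L_def D_def by auto
    then have "d1 = d2" using r d1 d2 eq by (metis inj_onD)
    then have "(d1 i = u i \<or> d1 i = - u i) \<and> (d1 i = v i \<or> d1 i = - v i)"
      using d1 d2 unfolding L_def by auto
    then have uv': "u i = v i \<or> u i = - v i" by (metis minus_minus)
    have "inner (v i) (v i) = 1" using v unit_val[OF sc _ i] inner_self_unit
      unfolding D_def by auto
    then show False using uv uv' unfolding Ri_def by (auto simp: inner_minus_left)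
  qed
  have cover: "\<forall>u\<in>C - X. \<forall>v\<in>C - X. u \<noteq> v \<longrightarrow>
      (\<exists>i<n. (u \<in> A i \<and> v \<in> B i) \<or> (u \<in> B i \<and> v \<in> A i))"
  proof (intro ballI impI)
    fix u v assume u: "u \<in> C - X" and v: "v \<in> C - X" and uv: "u \<noteq> v"
    define T where "T = insert u (insert v X)"
    have T: "T \<subseteq> C" "finite T" "card T = CARD('k)"
      unfolding T_def using u v uv X finX by auto
    obtain i where i: "i < n" and orth: "\<forall>x\<in>T. \<forall>y\<in>T. x \<noteq> y \<longrightarrow> inner (x i) (y i) = 0"
      using sep T unfolding vector_k_separating_def by blast
    have cT: "clq (Ri i) T" using orth unfolding clq_def Ri_def by auto
    have uD: "u \<in> D i" unfolding D_def using u by (auto intro: clq_subset[OF cT] simp: T_def)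
    have vD: "v \<in> D i" unfolding D_def using v by (auto intro: clq_subset[OF cT] simp: T_def)
    have Ruv: "Ri i u v" "Ri i v u" using orth uv unfolding T_def Ri_def by auto
    have cu: "col i u \<longleftrightarrow> Min (r ` L i u) < Min (r ` L i v)"
      unfolding col_def claim[OF i uD vD Ruv(1)] ..
    have cv: "col i v \<longleftrightarrow> Min (r ` L i v) < Min (r ` L i u)"
      unfolding col_def claim[OF i vD uD Ruv(2)] ..
    have "Min (r ` L i u) \<noteq> Min (r ` L i v)" by (rule mins[OF i uD vD Ruv(1)])
    then have "(col i u \<and> \<not> col i v) \<or> (\<not> col i u \<and> col i v)" using cu cv by linarith
    then show "\<exists>i<n. (u \<in> A i \<and> v \<in> B i) \<or> (u \<in> B i \<and> v \<in> A i)"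
      using i uD vD unfolding A_def B_def by blast
  qed
  have "real (card (C - X)) * log 2 (real (card (C - X)))
      \<le> (\<Sum>i<n. real (card {v\<in>C - X. v \<in> A i \<union> B i}))"
    by (rule hansel[OF disj _ ne cover]) (use fin in simp)
  then show ?thesis unfolding AB D_def .
qed

lemma double_count:
  assumes fin: "finite C"
  shows "(\<Sum>X\<in>{X. X \<subseteq> C \<and> card X = j}. card {c\<in>C - X. clq R (insert c X)})
        = Suc j * card (cls R C (Suc j))"
proof -
  define SS where "SS = {X. X \<subseteq> C \<and> card X = j}"
  define D where "D X = {c\<in>C - X. clq R (insert c X)}" for X
  have finSS: "finite SS" unfolding SS_def
    by (rule finite_subset[of _ "Pow C"]) (use fin in auto)
  have fincls: "finite (cls R C (Suc j))" using fin by (rule finite_cls)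
  have fX: "\<And>X. X \<in> SS \<Longrightarrow> finite X" unfolding SS_def using fin by (auto intro: finite_subset)
  have "(\<Sum>X\<in>SS. card (D X)) = card (SIGMA X:SS. D X)"
    by (rule card_SigmaI[symmetric]) (use finSS fin in \<open>auto simp: D_def\<close>)
  also have "\<dots> = card (SIGMA T:cls R C (Suc j). T)"
  proof (rule bij_betw_same_card[of "\<lambda>(X, c). (insert c X, c)"], rule bij_betw_byWitness[of _ "\<lambda>(T, c). (T - {c}, c)"])
    show "\<forall>a\<in>SIGMA X:SS. D X. (case (case a of (X, c) \<Rightarrow> (insert c X, c)) of (T, c) \<Rightarrow> (T - {c}, c)) = a"
      unfolding D_def by auto
    show "\<forall>a\<in>SIGMA T:cls R C (Suc j). T. (case (case a of (T, c) \<Rightarrow> (T - {c}, c)) of (X, c) \<Rightarrow> (insert c X, c)) = a"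
      by auto
    show "(\<lambda>(X, c). (insert c X, c)) ` (SIGMA X:SS. D X) \<subseteq> (SIGMA T:cls R C (Suc j). T)"
      using fX by (force simp: SS_def D_def cls_def)
    show "(\<lambda>(T, c). (T - {c}, c)) ` (SIGMA T:cls R C (Suc j). T) \<subseteq> (SIGMA X:SS. D X)"
    proof (rule subsetI)
      fix p assume "p \<in> (\<lambda>(T, c). (T - {c}, c)) ` (SIGMA T:cls R C (Suc j). T)"
      then obtain T c where T: "T \<in> cls R C (Suc j)" "c \<in> T" and p: "p = (T - {c}, c)" by auto
      then have "finite T" unfolding cls_def using fin by (auto intro: finite_subset)
      moreover have "insert c (T - {c}) = T" using T by auto
      ultimately show "p \<in> (SIGMA X:SS. D X)" using T unfolding p SS_def D_def cls_def by auto
    qed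
  qed
  also have "\<dots> = (\<Sum>T\<in>cls R C (Suc j). card T)"
    by (rule card_SigmaI) (use fincls fin in \<open>auto simp: cls_def intro: finite_subset\<close>)
  also have "\<dots> = Suc j * card (cls R C (Suc j))" by (simp add: cls_def)
  finally show ?thesis unfolding SS_def D_def .
qed

lemma Fw_one: "Fw R (\<lambda>_. 1) V t = real (card (cls R V t))"
  by (simp add: Fw_def)

lemma key:
  fixes C :: "(nat \<Rightarrow> real^'k) set"
  assumes sc: "sphere_code n C" and sep: "vector_k_separating n C" and fin: "finite C"
    and K3: "CARD('k) \<ge> 3" and m: "card C \<ge> CARD('k) - 1"
  shows "real (card C choose (CARD('k) - 1)) * log 2 (real (card C) - real CARD('k) + 2)
     \<le> real n * real CARD('k) * (real (card C) / real CARD('k)) ^ (CARD('k) - 1)"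
proof -
  define K where "K = CARD('k)"
  define j where "j = K - 2"
  define M where "M = card C"
  have Kj: "K = Suc (Suc j)" "K - 1 = Suc j" using K3 unfolding K_def j_def by auto
  have mj: "M \<ge> Suc j" using m K3 unfolding M_def K_def j_def by simp
  define SS where "SS = {X. X \<subseteq> C \<and> card X = j}"
  define cnt where "cnt i X = real (card {c\<in>C - X. clq (Ri i) (insert c X)})" for i X
  have finSS: "finite SS" unfolding SS_def
    by (rule finite_subset[of _ "Pow C"]) (use fin in auto)
  have cardSS: "card SS = M choose j" unfolding SS_def M_def using n_subsets[OF fin] by simp
  have cdiff: "card (C - X) = M - j" if "X \<in> SS" for X
    using that fin unfolding SS_def M_def by (metis (mono_tags, lifting) card_Diff_subset finite_subset mem_Collect_eq)
  have perX: "real (M - j) * log 2 (real (M - j)) \<le> (\<Sum>i<n. cnt i X)" if X: "X \<in> SS" for X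
  proof -
    have "card (C - X) \<noteq> 0" using cdiff[OF X] mj by simp
    then have "C - X \<noteq> {}" by (metis card.empty)
    moreover have "X \<subseteq> C" "card X + 2 = CARD('k)" using X Kj unfolding SS_def K_def by auto
    ultimately have "real (card (C - X)) * log 2 (real (card (C - X)))
     \<le> (\<Sum>i<n. real (card {c\<in>C - X. clq (Ri i) (insert c X)}))"
      by (intro per_X[OF sc sep fin]) auto
    then show ?thesis unfolding cnt_def cdiff[OF X] .
  qed
  have "real (M choose j) * (real (M - j) * log 2 (real (M - j)))
      = (\<Sum>X\<in>SS. real (M - j) * log 2 (real (M - j)))" by (simp add: cardSS)
  also have "\<dots> \<le> (\<Sum>X\<in>SS. \<Sum>i<n. cnt i X)" by (rule sum_mono) (rule perX)
  also have "\<dots> = (\<Sum>i<n. \<Sum>X\<in>SS. cnt i X)" by (rule sum.swap)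
  also have "\<dots> = (\<Sum>i<n. real (Suc j) * Fw (Ri i) (\<lambda>_. 1) C (Suc j))"
  proof (rule sum.cong[OF refl])
    fix i
    have "(\<Sum>X\<in>SS. cnt i X) = real (\<Sum>X\<in>SS. card {c\<in>C - X. clq (Ri i) (insert c X)})"
      unfolding cnt_def by simp
    also have "\<dots> = real (Suc j * card (cls (Ri i) C (Suc j)))"
      unfolding SS_def by (subst double_count[OF fin]) rule
    finally show "(\<Sum>X\<in>SS. cnt i X) = real (Suc j) * Fw (Ri i) (\<lambda>_. 1) C (Suc j)"
      by (simp add: Fw_one algebra_simps)
  qed
  also have "\<dots> \<le> (\<Sum>i<n. real (Suc j) * (real (K choose Suc j) * (real M / real K) ^ Suc j))"
  proof (rule sum_mono)
    fix i assume "i \<in> {..<n}"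
    then have i: "i < n" by simp
    have "Fw (Ri i) (\<lambda>_. 1) C (Suc j) \<le> real (K choose Suc j) * (sum (\<lambda>_. 1) C / real K) ^ Suc j"
      by (rule clique_bound[OF Ri_sym fin]) (use clique_card[OF sc i] in \<open>auto simp: K_def\<close>)
    then show "real (Suc j) * Fw (Ri i) (\<lambda>_. 1) C (Suc j)
        \<le> real (Suc j) * (real (K choose Suc j) * (real M / real K) ^ Suc j)"
      unfolding M_def by (intro mult_left_mono) auto
  qed
  also have "\<dots> = real (Suc j) * (real n * real K * (real M / real K) ^ Suc j)"
  proof -
    have "K choose Suc j = K" unfolding Kj by simp
    then show ?thesis by simp
  qed
  finally have ineq: "real (M choose j) * (real (M - j) * log 2 (real (M - j)))
      \<le> real (Suc j) * (real n * real K * (real M / real K) ^ Suc j)" .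
  have bin: "(M choose j) * (M - j) = (M choose Suc j) * Suc j"
    using binomial_absorption[of j M] binomial_absorb_comp[of M j] by (simp add: mult.commute)
  have "real (M choose j) * (real (M - j) * log 2 (real (M - j)))
      = real (Suc j) * (real (M choose Suc j) * log 2 (real (M - j)))"
  proof -
    have h: "real (M choose j) * real (M - j) = real (Suc j) * real (M choose Suc j)"
      using bin by (metis of_nat_mult mult.commute)
    show ?thesis unfolding mult.assoc[symmetric] h ..
  qed
  with ineq have "real (M choose Suc j) * log 2 (real (M - j)) \<le> real n * real K * (real M / real K) ^ Suc j"
    by (simp del: of_nat_Suc)
  moreover have "real (M - j) = real M - real K + 2" using mj Kj by (simp add: of_nat_diff)
  ultimately show ?thesis unfolding K_def M_def Kj[unfolded K_def] by simp
qed


lemma bin_lower: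
  assumes "k \<le> m"
  shows "(real m - real k + 1) ^ k \<le> real (m choose k) * fact k"
proof -
  have "real (m choose k) * fact k = (real m gchoose k) * fact k"
    by (simp only: binomial_gbinomial)
  also have "\<dots> = (\<Prod>i = 0..<k. real m - real i)"
    by (rule gbinomial_mult_fact')
  finally have eq: "real (m choose k) * fact k = (\<Prod>i = 0..<k. real m - real i)" .
  have "(\<Prod>i = 0..<k. real m - real k + 1) \<le> (\<Prod>i = 0..<k. real m - real i)"
    by (rule prod_mono) (use assms in auto)
  then show ?thesis unfolding eq by simp
qed

lemma reorder_aux: "a * b * (c / d) * e = a * (b * e / d) * (c::real)"
  by (simp add: algebra_simps)

lemma subcode:
  assumes "sphere_code n C" "vector_k_separating n C" "S \<subseteq> C"
  shows "sphere_code n S" "vector_k_separating n S"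
proof -
  show "sphere_code n S" using assms unfolding sphere_code_def by (meson order_trans)
  show "vector_k_separating n S" using assms(2,3) unfolding vector_k_separating_def
    by (meson order_trans)
qed

lemma rate_core:
  fixes C :: "(nat \<Rightarrow> real^'k) set"
  assumes sc: "sphere_code n C" and sep: "vector_k_separating n C" and fin: "finite C"
    and K3: "CARD('k) \<ge> 3" and m: "card C \<ge> CARD('k) - 1"
  shows "(real (card C) - (real CARD('k) - 2)) ^ (CARD('k) - 1) * log 2 (real (card C) - (real CARD('k) - 2))
     \<le> real n * (fact CARD('k) / real CARD('k) ^ (CARD('k) - 1)) * real (card C) ^ (CARD('k) - 1)"
proof -
  define K where "K = CARD('k)"
  define M where "M = card C"
  define L where "L = log 2 (real M - (real K - 2))"
  have K3': "K \<ge> 3" using K3 by (simp add: K_def)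
  have mK: "M \<ge> K - 1" using m by (simp add: K_def M_def)
  have KM0: "K \<le> M + 1" using mK by arith
  have "real K \<le> real (M + 1)" using KM0 by (simp only: of_nat_le_iff)
  then have KM: "real K \<le> real M + 1" by simp
  have one: "1 \<le> real M - (real K - 2)" using KM by linarith
  have "log 2 1 \<le> log 2 (real M - (real K - 2))"
    by (rule log_mono) (use one in auto)
  then have L0: "L \<ge> 0" unfolding L_def by simp
  have e1: "real M - real (K - 1) + 1 = real M - (real K - 2)" using K3' by (simp add: of_nat_diff)
  have e2: "real M - real K + 2 = real M - (real K - 2)" by simp
  have Kpos: "real K > 0" using K3' by simp
  have keyi: "real (M choose (K - 1)) * L \<le> real n * real K * (real M / real K) ^ (K - 1)"
    using key[OF sc sep fin K3 m] unfolding K_def[symmetric] M_def[symmetric] L_def e2 .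
  have bl: "(real M - real (K - 1) + 1) ^ (K - 1) \<le> real (M choose (K - 1)) * fact (K - 1)"
    by (rule bin_lower[OF mK])
  have fK: "fact K = real K * fact (K - 1)"
  proof -
    obtain K' where "K = Suc K'" using K3' by (cases K) auto
    then show ?thesis by simp
  qed
  have "(real M - (real K - 2)) ^ (K - 1) * L \<le> real (M choose (K - 1)) * fact (K - 1) * L"
    using bl[unfolded e1] L0 by (rule mult_right_mono)
  also have "\<dots> = (real (M choose (K - 1)) * L) * fact (K - 1)" by (simp add: algebra_simps)
  also have "\<dots> \<le> (real n * real K * (real M / real K) ^ (K - 1)) * fact (K - 1)"
    using keyi by (intro mult_right_mono) auto
  also have "\<dots> = real n * (fact K / real K ^ (K - 1)) * real M ^ (K - 1)"
    unfolding fK power_divide by (rule reorder_aux)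
  finally show ?thesis unfolding K_def M_def L_def .
qed


lemma bounded_code:
  fixes C :: "(nat \<Rightarrow> real^'k) set"
  assumes sc: "sphere_code n C" and sep: "vector_k_separating n C" and fin: "finite C"
    and K3: "CARD('k) \<ge> 3" and m: "card C \<ge> CARD('k) - 1"
  shows "log 2 (real (card C) - real CARD('k) + 2) \<le> real n * real CARD('k)"
proof -
  define K where "K = CARD('k)"
  define M where "M = card C"
  define L where "L = log 2 (real M - real K + 2)"
  have K3': "K \<ge> 3" using K3 by (simp add: K_def)
  have mK: "K - 1 \<le> M" using m by (simp add: K_def M_def)
  have keyi: "real (M choose (K - 1)) * L \<le> real n * real K * (real M / real K) ^ (K - 1)"
    using key[OF sc sep fin K3 m] unfolding K_def[symmetric] M_def[symmetric] L_def .
  have bge: "(real M / real (K - 1)) ^ (K - 1) \<le> real (M choose (K - 1))"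
    by (rule binomial_ge_n_over_k_pow_k[OF mK])
  have Mpos: "real M > 0" using mK K3' by simp
  have K1pos: "real (K - 1) > 0" using K3' by simp
  have frac: "real M / real K \<le> real M / real (K - 1)"
    using Mpos K1pos K3' by (intro divide_left_mono) auto
  define P where "P = (real M / real (K - 1)) ^ (K - 1)"
  have P0: "P > 0" unfolding P_def using Mpos K1pos by simp
  have one: "1 \<le> real M - real K + 2" using mK K3' by linarith
  have "log 2 1 \<le> log 2 (real M - real K + 2)"
    by (rule log_mono) (use one in auto)
  then have L0: "L \<ge> 0" unfolding L_def by simp
  have "P * L \<le> real (M choose (K - 1)) * L" unfolding P_def using bge L0 by (rule mult_right_mono)
  also have "\<dots> \<le> real n * real K * (real M / real K) ^ (K - 1)" by (rule keyi)
  also have "\<dots> \<le> real n * real K * P" unfolding P_def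
    using frac Mpos by (intro mult_left_mono power_mono) auto
  finally have "P * L \<le> P * (real n * real K)" by (simp add: algebra_simps)
  then have "L \<le> real n * real K" using P0 by simp
  then show ?thesis unfolding L_def K_def M_def .
qed

lemma finite_code:
  fixes C :: "(nat \<Rightarrow> real^'k) set"
  assumes sc: "sphere_code n C" and sep: "vector_k_separating n C" and K3: "CARD('k) \<ge> 3"
  shows "finite C"
proof (rule ccontr)
  assume inf: "\<not> finite C"
  define K where "K = CARD('k)"
  obtain S where S: "finite S" "card S = 2 ^ (n * K) + K" "S \<subseteq> C"
    using infinite_arbitrarily_large[OF inf] by blast
  have scS: "sphere_code n S" and sepS: "vector_k_separating n S" using subcode[OF sc sep S(3)] by auto
  have "log 2 (real (card S) - real CARD('k) + 2) \<le> real n * real CARD('k)"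
    by (rule bounded_code[OF scS sepS S(1) K3]) (use S(2) in \<open>simp add: K_def\<close>)
  then have le: "log 2 (2 ^ (n * K) + 2) \<le> real (n * K)" using S(2) unfolding K_def by simp
  have "log 2 ((2::real) ^ (n * K)) = real (n * K)" by (simp add: log_nat_power)
  moreover have "log 2 ((2::real) ^ (n * K)) < log 2 (2 ^ (n * K) + 2)"
  proof -
    have p: "(0::real) < 2 ^ (n * K)" by simp
    then have q: "(0::real) < 2 ^ (n * K) + 2" by linarith
    show ?thesis by (rule iffD2[OF log_less_cancel_iff]) (use p q in simp_all)
  qed
  ultimately show False using le by simp
qed

lemma large_case:
  fixes C :: "(nat \<Rightarrow> real^'k) set"
  assumes sc: "sphere_code n C" and sep: "vector_k_separating n C" and fin: "finite C"
    and K3: "CARD('k) \<ge> 3" and th: "0 < \<theta>" "\<theta> < 1"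
    and mth: "(real CARD('k) - 1) * (real CARD('k) - 2) \<le> \<theta> * real (card C)"
    and m2: "2 * CARD('k) \<le> card C"
  shows "log 2 (real (card C)) \<le> real n * ((fact CARD('k) / real CARD('k) ^ (CARD('k) - 1)) / (1 - \<theta>)) + 1"
proof -
  define K where "K = CARD('k)"
  define M where "M = card C"
  define c where "c = real K - 2"
  define \<rho> where "\<rho> = fact K / real K ^ (K - 1)"
  define L where "L = log 2 (real M - c)"
  have K3': "K \<ge> 3" using K3 by (simp add: K_def)
  have mK: "CARD('k) - 1 \<le> card C" using m2 by simp
  have core: "(real M - c) ^ (K - 1) * L \<le> real n * \<rho> * real M ^ (K - 1)"
    using rate_core[OF sc sep fin K3 mK] unfolding K_def[symmetric] M_def[symmetric] c_def L_def \<rho>_def .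
  have M2: "2 * real K \<le> real M" using m2 unfolding K_def M_def
    by (metis of_nat_le_iff of_nat_mult of_nat_numeral)
  have Mpos: "real M > 0" using M2 K3' by simp
  have c0: "c \<ge> 0" unfolding c_def using K3' by simp
  have cM: "2 * c \<le> real M" unfolding c_def using M2 by simp
  have one: "1 \<le> real M - c" using cM c0 M2 K3' unfolding c_def by simp
  have "log 2 1 \<le> log 2 (real M - c)"
    by (rule log_mono) (use one in auto)
  then have L0: "L \<ge> 0" unfolding L_def by simp
  have x1: "-1 \<le> - c / real M" using cM Mpos c0 by (simp add: field_simps)
  have bern: "1 + real (K - 1) * (- c / real M) \<le> (1 + (- c / real M)) ^ (K - 1)"
    by (rule Bernoulli_inequality[OF x1])
  have rK: "real (K - 1) = real K - 1" using K3' by (simp add: of_nat_diff)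
  have "real (K - 1) * c / real M \<le> \<theta>"
    using mth Mpos unfolding rK c_def K_def M_def by (simp add: field_simps)
  then have "1 - \<theta> \<le> 1 + real (K - 1) * (- c / real M)" by simp
  with bern have b2: "1 - \<theta> \<le> (1 - c / real M) ^ (K - 1)" by simp
  have fac: "(real M - c) ^ (K - 1) = real M ^ (K - 1) * (1 - c / real M) ^ (K - 1)"
  proof -
    have "real M - c = real M * (1 - c / real M)" using Mpos by (simp add: field_simps)
    then show ?thesis by (metis power_mult_distrib)
  qed
  have MKpos: "real M ^ (K - 1) > 0" using Mpos by simp
  have "real M ^ (K - 1) * ((1 - \<theta>) * L) \<le> real M ^ (K - 1) * ((1 - c / real M) ^ (K - 1) * L)"
    using b2 L0 MKpos by (intro mult_left_mono mult_right_mono) auto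
  also have "\<dots> = (real M - c) ^ (K - 1) * L" unfolding fac by simp
  also have "\<dots> \<le> real n * \<rho> * real M ^ (K - 1)" by (rule core)
  also have "\<dots> = real M ^ (K - 1) * (real n * \<rho>)" by simp
  finally have "(1 - \<theta>) * L \<le> real n * \<rho>" using MKpos by (simp only: mult_le_cancel_left_pos)
  then have Lb: "L \<le> real n * (\<rho> / (1 - \<theta>))" using th by (simp add: field_simps)
  have "log 2 (real M) \<le> log 2 (2 * (real M - c))"
    by (rule log_mono) (use Mpos cM in auto)
  also have "\<dots> = log 2 2 + log 2 (real M - c)"
    by (rule log_mult_pos) (use one in auto)
  also have "\<dots> = 1 + L" unfolding L_def by simp
  finally show ?thesis using Lb unfolding M_def[symmetric] \<rho>_def K_def by simp
qed

theorem theorem2: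
  assumes "CARD('k) \<ge> 3"
  shows "\<forall>\<epsilon>>0. \<exists>N. \<forall>n\<ge>N. \<forall>C :: (nat \<Rightarrow> real^'k) set.
           sphere_code n C \<and> vector_k_separating n C \<longrightarrow>
             finite C \<and>
             (C \<noteq> {} \<longrightarrow> log 2 (real (card C)) / real n
                 \<le> real (fact CARD('k)) / real CARD('k) ^ (CARD('k) - 1) + \<epsilon>)"
proof (intro allI impI)
  fix \<epsilon> :: real assume ep: "\<epsilon> > 0"
  define K where "K = CARD('k)"
  define \<rho> where "\<rho> = (fact K :: real) / real K ^ (K - 1)"
  define \<theta> where "\<theta> = \<epsilon> / (2 * \<rho> + \<epsilon>)"
  define m1 :: nat where "m1 = nat \<lceil>(real K - 1) * (real K - 2) / \<theta>\<rceil> + 2 * K"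
  define N :: nat where "N = nat \<lceil>2 / \<epsilon> + log 2 (real m1) / \<epsilon>\<rceil> + 1"
  have K3: "K \<ge> 3" using assms by (simp add: K_def)
  have rho0: "\<rho> > 0" unfolding \<rho>_def using K3 by simp
  have th0: "\<theta> > 0" "\<theta> < 1" unfolding \<theta>_def using rho0 ep by (auto simp: field_simps)
  have rhoth: "\<rho> / (1 - \<theta>) = \<rho> + \<epsilon> / 2"
    unfolding \<theta>_def using rho0 ep by (simp add: field_simps)
  have m1pos: "m1 \<ge> 1" unfolding m1_def using K3 by simp
  show "\<exists>N. \<forall>n\<ge>N. \<forall>C :: (nat \<Rightarrow> real^'k) set.
           sphere_code n C \<and> vector_k_separating n C \<longrightarrow>
             finite C \<and>
             (C \<noteq> {} \<longrightarrow> log 2 (real (card C)) / real n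
                 \<le> real (fact CARD('k)) / real CARD('k) ^ (CARD('k) - 1) + \<epsilon>)"
  proof (intro exI[of _ N] allI impI conjI)
    fix n :: nat and C :: "(nat \<Rightarrow> real^'k) set"
    assume nN: "n \<ge> N" and C: "sphere_code n C \<and> vector_k_separating n C"
    then have sc: "sphere_code n C" and sep: "vector_k_separating n C" by auto
    show fin: "finite C" by (rule finite_code[OF sc sep assms])
    assume ne: "C \<noteq> {}"
    define m where "m = card C"
    have m1': "m \<ge> 1" using fin ne unfolding m_def by (simp add: Suc_le_eq card_gt_0_iff)
    have mpos: "real m > 0" using m1' by simp
    have nbig: "real n \<ge> 2 / \<epsilon> + log 2 (real m1) / \<epsilon>"
    proof -
      have "2 / \<epsilon> + log 2 (real m1) / \<epsilon> \<le> real (nat \<lceil>2 / \<epsilon> + log 2 (real m1) / \<epsilon>\<rceil>)"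
        by (rule real_nat_ceiling_ge)
      also have "\<dots> \<le> real N" unfolding N_def by simp
      also have "\<dots> \<le> real n" using nN by simp
      finally show ?thesis .
    qed
    have lm1: "log 2 (real m1) \<ge> 0" using m1pos by simp
    have npos: "real n > 0"
    proof -
      have "2 / \<epsilon> > 0" using ep by simp
      then show ?thesis using nbig lm1 ep by (smt (verit) divide_nonneg_pos)
    qed
    have goal: "log 2 (real m) \<le> real n * (\<rho> + \<epsilon>)"
    proof (cases "m < m1")
      case True
      have "log 2 (real m) \<le> log 2 (real m1)"
        by (rule log_mono) (use True mpos in auto)
      also have "\<dots> \<le> real n * \<epsilon>"
      proof -
        have "log 2 (real m1) / \<epsilon> \<le> real n"
          using nbig ep by (smt (verit) divide_nonneg_pos)
        then show ?thesis using ep by (simp add: field_simps)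
      qed
      also have "\<dots> \<le> real n * (\<rho> + \<epsilon>)" using npos rho0 by simp
      finally show ?thesis .
    next
      case False
      then have mm1: "m \<ge> m1" by simp
      have c1: "(real CARD('k) - 1) * (real CARD('k) - 2) \<le> \<theta> * real (card C)"
      proof -
        have "(real K - 1) * (real K - 2) / \<theta> \<le> real (nat \<lceil>(real K - 1) * (real K - 2) / \<theta>\<rceil>)"
          by (rule real_nat_ceiling_ge)
        also have "\<dots> \<le> real m"
        proof -
          have "nat \<lceil>(real K - 1) * (real K - 2) / \<theta>\<rceil> \<le> m" using mm1 unfolding m1_def by linarith
          then show ?thesis by (simp only: of_nat_le_iff)
        qed
        finally show ?thesis using th0 unfolding K_def m_def by (simp add: field_simps)
      qed
      have c2: "2 * CARD('k) \<le> card C" using mm1 unfolding m1_def K_def m_def by simp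
      have "log 2 (real m) \<le> real n * (\<rho> / (1 - \<theta>)) + 1"
        using large_case[OF sc sep fin assms th0 c1 c2] unfolding m_def \<rho>_def K_def by simp
      also have "\<dots> = real n * (\<rho> + \<epsilon> / 2) + 1" unfolding rhoth ..
      also have "\<dots> \<le> real n * (\<rho> + \<epsilon>)"
      proof -
        have "2 / \<epsilon> \<le> real n" using nbig lm1 ep by (smt (verit) divide_nonneg_pos)
        then have "1 \<le> real n * (\<epsilon> / 2)" using ep by (simp add: field_simps)
        then show ?thesis by (simp add: algebra_simps)
      qed
      finally show ?thesis .
    qed
    show "log 2 (real (card C)) / real n
        \<le> real (fact CARD('k)) / real CARD('k) ^ (CARD('k) - 1) + \<epsilon>"
      using goal npos unfolding m_def \<rho>_def K_def by (simp add: pos_divide_le_eq mult.commute)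
  qed
qed

end
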